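(* Let $f_j(\Delta'_{n,k})$ denote the number of $j$-dimensional faces of the half-open hypersimplex $\Delta'_{n,k}$. Then, as formal power series, $$ \sum_{n\ge1}\sum_{k=1}^n\sum_{j=1}^n f_j(\Delta'_{n,k})\,x^k y^{n-k}t^j=\frac{(1-x)xt}{(1-x-y)(1-x-y-xt)(1-x-y-yt)}. $$
   Context: For integers $0<k\le n$, $\Delta_{n,k}=\{(x_1,\ldots,x_n)\in[0,1]^n : k-1\le x_1+\cdots+x_n\le k\}$ (a convex polytope) and the half-open hypersimplex is $\Delta'_{n,k}=\{(x_1,\ldots,x_n)\in[0,1]^n : k-1< x_1+\cdots+x_n\le k\}$. A $j$-face of $\Delta'_{n,k}$ is a set $F\cap\Delta'_{n,k}$ where $F$ is a $j$-dimensional face of $\Delta_{n,k}$ with $F\cap\Delta'_{n,k}\neq\emptyset$; $f_j(\Delta'_{n,k})$ is the number of such sets. *)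

theory Defs
  imports "HOL-Analysis.Analysis" "HOL-Library.Function_Algebras"
    "HOL-Computational_Algebra.Formal_Power_Series"
begin

text \<open>Points of R^n are represented as functions nat => real vanishing outside {0..<n}
  (coordinates x_1..x_n are x 0 .. x (n-1)).\<close>

definition pt_scale :: "real \<Rightarrow> (nat \<Rightarrow> real) \<Rightarrow> (nat \<Rightarrow> real)" where
  "pt_scale c x = (\<lambda>i. c * x i)"

lemma vector_space_pt: "vector_space pt_scale"
  by unfold_locales (auto simp: pt_scale_def fun_eq_iff algebra_simps)

definition hypersimplex :: "nat \<Rightarrow> nat \<Rightarrow> (nat \<Rightarrow> real) set" where
  "hypersimplex n k = {x. (\<forall>i<n. 0 \<le> x i \<and> x i \<le> 1) \<and> (\<forall>i\<ge>n. x i = 0) \<and>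
      real k - 1 \<le> (\<Sum>i<n. x i) \<and> (\<Sum>i<n. x i) \<le> real k}"

definition hypersimplex_ho :: "nat \<Rightarrow> nat \<Rightarrow> (nat \<Rightarrow> real) set" where
  "hypersimplex_ho n k = {x. (\<forall>i<n. 0 \<le> x i \<and> x i \<le> 1) \<and> (\<forall>i\<ge>n. x i = 0) \<and>
      real k - 1 < (\<Sum>i<n. x i) \<and> (\<Sum>i<n. x i) \<le> real k}"

definition closed_seg :: "(nat \<Rightarrow> real) \<Rightarrow> (nat \<Rightarrow> real) \<Rightarrow> (nat \<Rightarrow> real) set" where
  "closed_seg a b = {(\<lambda>i. (1 - u) * a i + u * b i) | u. 0 \<le> u \<and> u \<le> (1::real)}"

definition open_seg :: "(nat \<Rightarrow> real) \<Rightarrow> (nat \<Rightarrow> real) \<Rightarrow> (nat \<Rightarrow> real) set" where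
  "open_seg a b = closed_seg a b - {a, b}"

definition convex_pt :: "(nat \<Rightarrow> real) set \<Rightarrow> bool" where
  "convex_pt S \<longleftrightarrow> (\<forall>a\<in>S. \<forall>b\<in>S. closed_seg a b \<subseteq> S)"

definition is_face :: "(nat \<Rightarrow> real) set \<Rightarrow> (nat \<Rightarrow> real) set \<Rightarrow> bool" where
  "is_face F P \<longleftrightarrow> F \<subseteq> P \<and> convex_pt F \<and>
     (\<forall>a\<in>P. \<forall>b\<in>P. \<forall>x\<in>F. x \<in> open_seg a b \<longrightarrow> a \<in> F \<and> b \<in> F)"

definition aff_dim_pt :: "(nat \<Rightarrow> real) set \<Rightarrow> int" where
  "aff_dim_pt F = (if F = {} then -1 else int (vector_space.dim pt_scale {x - y | x y. x \<in> F \<and> y \<in> F}))"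

definition f_ho :: "nat \<Rightarrow> nat \<Rightarrow> nat \<Rightarrow> nat" where
  "f_ho j n k = card {G. \<exists>F. is_face F (hypersimplex n k) \<and> aff_dim_pt F = int j \<and>
      G = F \<inter> hypersimplex_ho n k \<and> G \<noteq> {}}"

text \<open>Three-variable formal power series as nested fps: outer variable x, middle y, inner t.\<close>
definition fps_x :: "int fps fps fps" where "fps_x = fps_X"
definition fps_y :: "int fps fps fps" where "fps_y = fps_const fps_X"
definition fps_t :: "int fps fps fps" where "fps_t = fps_const (fps_const fps_X)"

text \<open>The generating series sum_{n>=1} sum_{k=1}^n sum_{j=1}^n f_j x^k y^(n-k) t^j,
  written coefficientwise: coefficient of x^k y^m t^j is f_j(Delta'_{k+m,k}).\<close>
definition face_gf :: "int fps fps fps" where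
  "face_gf = Abs_fps (\<lambda>k. Abs_fps (\<lambda>m. Abs_fps (\<lambda>j.
      if 1 \<le> k \<and> 1 \<le> j \<and> j \<le> k + m then int (f_ho j (k + m) k) else 0)))"

end

theory Submission
  imports Defs
begin

definition Mn :: "nat \<Rightarrow> nat \<Rightarrow> nat \<Rightarrow> nat" where
  "Mn a b c = ((a+b+c) choose c) * ((a+b) choose b)"

lemma Mn_fact: "real (Mn a b c) = fact (a+b+c) / (fact a * fact b * fact c)"
proof -
  have 1: "real ((a+b+c) choose c) = fact (a+b+c) / (fact c * fact (a+b))"
    using binomial_fact[of c "a+b+c", where 'a=real] by simp
  have 2: "real ((a+b) choose b) = fact (a+b) / (fact b * fact a)"
    using binomial_fact[of b "a+b", where 'a=real] by simp
  show ?thesis unfolding Mn_def of_nat_mult 1 2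
    by (simp add: field_simps)
qed

lemma fact_S: "(fact (Suc n) :: real) = real (Suc n) * fact n" by simp

lemma aux_div: "(z::real) \<noteq> 0 \<Longrightarrow> x / (z * w) * z = x / w"
  by (cases "w = 0") (simp_all add: field_simps)

lemma Mn_sucA: "real (Mn (Suc a) b c) * real (Suc a) = real (Mn a b c) * real (a+b+c+1)"
proof -
  have "real (Mn (Suc a) b c) = (real (Suc (a+b+c)) * fact (a+b+c)) / (real (Suc a) * (fact a * fact b * fact c))"
    unfolding Mn_fact fact_S[of a] by (simp add: mult.assoc fact_S del: of_nat_Suc fact_Suc)
  then have "real (Mn (Suc a) b c) * real (Suc a) = (real (Suc (a+b+c)) * fact (a+b+c)) / (fact a * fact b * fact c)"
    using aux_div[of "real (Suc a)"] by (simp del: of_nat_Suc fact_Suc)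
  then show ?thesis unfolding Mn_fact by (simp add: ac_simps)
qed

lemma Mn_sucB: "real (Mn a (Suc b) c) * real (Suc b) = real (Mn a b c) * real (a+b+c+1)"
proof -
  have "real (Mn a (Suc b) c) = (real (Suc (a+b+c)) * fact (a+b+c)) / (real (Suc b) * (fact a * fact b * fact c))"
    unfolding Mn_fact fact_S[of b] by (simp add: ac_simps fact_S del: of_nat_Suc fact_Suc)
  then have "real (Mn a (Suc b) c) * real (Suc b) = (real (Suc (a+b+c)) * fact (a+b+c)) / (fact a * fact b * fact c)"
    using aux_div[of "real (Suc b)"] by (simp del: of_nat_Suc fact_Suc)
  then show ?thesis unfolding Mn_fact by (simp add: ac_simps)
qed

lemma Mn_sucC: "real (Mn a b (Suc c)) * real (Suc c) = real (Mn a b c) * real (a+b+c+1)"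
proof -
  have "real (Mn a b (Suc c)) = (real (Suc (a+b+c)) * fact (a+b+c)) / (real (Suc c) * (fact a * fact b * fact c))"
    unfolding Mn_fact fact_S[of c] by (simp add: ac_simps fact_S del: of_nat_Suc fact_Suc)
  then have "real (Mn a b (Suc c)) * real (Suc c) = (real (Suc (a+b+c)) * fact (a+b+c)) / (fact a * fact b * fact c)"
    using aux_div[of "real (Suc c)"] by (simp del: of_nat_Suc fact_Suc)
  then show ?thesis unfolding Mn_fact by (simp add: ac_simps)
qed
definition Mi :: "int \<Rightarrow> int \<Rightarrow> int \<Rightarrow> int" where
  "Mi a b c = (if a < 0 \<or> b < 0 \<or> c < 0 then 0 else int (Mn (nat a) (nat b) (nat c)))"

lemma Mn_pascal_real:
  fixes a b c :: nat
  shows "real (Mn a b c) = (if a = 0 then 0 else real (Mn (a-1) b c))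
     + (if b = 0 then 0 else real (Mn a (b-1) c)) + (if c = 0 then 0 else real (Mn a b (c-1)))
     + (if a = 0 \<and> b = 0 \<and> c = 0 then 1 else 0)"
proof (cases "a = 0 \<and> b = 0 \<and> c = 0")
  case True then show ?thesis by (simp add: Mn_def)
next
  case False
  define s where "s = real (a+b+c)"
  have s: "s > 0" using False by (auto simp: s_def)
  have tA: "(if a = 0 then 0 else real (Mn (a-1) b c)) * s = real (Mn a b c) * a"
  proof (cases a)
    case (Suc a') then show ?thesis using Mn_sucA[of a' b c] by (simp add: s_def algebra_simps)
  qed simp
  have tB: "(if b = 0 then 0 else real (Mn a (b-1) c)) * s = real (Mn a b c) * b"
  proof (cases b)
    case (Suc b') then show ?thesis using Mn_sucB[of a b' c] by (simp add: s_def algebra_simps)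
  qed simp
  have tC: "(if c = 0 then 0 else real (Mn a b (c-1))) * s = real (Mn a b c) * c"
  proof (cases c)
    case (Suc c') then show ?thesis using Mn_sucC[of a b c'] by (simp add: s_def algebra_simps)
  qed simp
  have "((if a = 0 then 0 else real (Mn (a-1) b c))
     + (if b = 0 then 0 else real (Mn a (b-1) c)) + (if c = 0 then 0 else real (Mn a b (c-1)))) * s
     = real (Mn a b c) * s"
    unfolding distrib_right tA tB tC by (simp add: s_def algebra_simps)
  then show ?thesis using s False by simp
qed

lemma Mi_pascal:
  "Mi a b c = Mi (a-1) b c + Mi a (b-1) c + Mi a b (c-1) + (if a = 0 \<and> b = 0 \<and> c = 0 then 1 else 0)"
proof (cases "a < 0 \<or> b < 0 \<or> c < 0")
  case True then show ?thesis by (auto simp: Mi_def)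
next
  case False
  then obtain a' b' c' :: nat where abc: "a = int a'" "b = int b'" "c = int c'"
    by (metis nonneg_int_cases not_less)
  have "real (Mn a' b' c') = (if a' = 0 then 0 else real (Mn (a'-1) b' c'))
     + (if b' = 0 then 0 else real (Mn a' (b'-1) c')) + (if c' = 0 then 0 else real (Mn a' b' (c'-1)))
     + (if a' = 0 \<and> b' = 0 \<and> c' = 0 then 1 else 0)" by (rule Mn_pascal_real)
  then have "int (Mn a' b' c') = (if a' = 0 then 0 else int (Mn (a'-1) b' c'))
     + (if b' = 0 then 0 else int (Mn a' (b'-1) c')) + (if c' = 0 then 0 else int (Mn a' b' (c'-1)))
     + (if a' = 0 \<and> b' = 0 \<and> c' = 0 then 1 else 0)"
    by (simp only: of_int_eq_iff[where 'a=real, symmetric]) (simp split: if_splits)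
  moreover have "Mi (int a' - 1) (int b') (int c') = (if a' = 0 then 0 else int (Mn (a'-1) b' c'))"
    by (cases a') (simp_all add: Mi_def)
  moreover have "Mi (int a') (int b' - 1) (int c') = (if b' = 0 then 0 else int (Mn a' (b'-1) c'))"
    by (cases b') (simp_all add: Mi_def)
  moreover have "Mi (int a') (int b') (int c' - 1) = (if c' = 0 then 0 else int (Mn a' b' (c'-1)))"
    by (cases c') (simp_all add: Mi_def)
  moreover have "Mi (int a') (int b') (int c') = int (Mn a' b' c')" by (simp add: Mi_def)
  ultimately show ?thesis unfolding abc by simp
qed

lemma sum_shift_int: "(\<Sum>b\<in>{p..q::int}. f b) = (\<Sum>b\<in>{p+1..q+1}. f (b-1))"
  by (rule sum.reindex_bij_witness[of _ "\<lambda>b. b-1" "\<lambda>b. b+1"]) auto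

definition Tf :: "int \<Rightarrow> int \<Rightarrow> int \<Rightarrow> int" where
  "Tf k m j = (\<Sum>b\<in>{k-j..k-1}. Mi (k+m-j-b) b j)"
definition Uf :: "int \<Rightarrow> int \<Rightarrow> int \<Rightarrow> int" where
  "Uf k m j = (\<Sum>b\<in>{k-j..k-1}. Mi (k+m-j-1-b) b (j+1))"
definition Vf :: "int \<Rightarrow> int \<Rightarrow> int \<Rightarrow> int" where
  "Vf k m j = Mi (m-j+1) (k-1) (j-1)"
definition Df :: "int \<Rightarrow> int \<Rightarrow> int \<Rightarrow> int" where
  "Df k m j = (if k = 1 \<and> m = 0 \<and> j = 1 then 1 else 0)"

lemma idU:
  assumes "0 \<le> j"
  shows "Uf k m j - Uf (k-1) m j - Uf k (m-1) j = Tf k (m-1) j"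
proof -
  have "Uf (k-1) m j = (\<Sum>b\<in>{k-j..k-1}. Mi (k+m-j-1-b) (b-1) (j+1))"
    unfolding Uf_def by (subst sum_shift_int) (simp add: algebra_simps)
  moreover have "Uf k (m-1) j = (\<Sum>b\<in>{k-j..k-1}. Mi (k+m-j-1-b-1) b (j+1))"
    unfolding Uf_def by (simp add: algebra_simps)
  ultimately have "Uf k m j - Uf (k-1) m j - Uf k (m-1) j =
     (\<Sum>b\<in>{k-j..k-1}. Mi (k+m-j-1-b) b (j+1) - Mi (k+m-j-1-b) (b-1) (j+1) - Mi (k+m-j-1-b-1) b (j+1))"
    unfolding Uf_def by (simp add: sum_subtractf)
  also have "\<dots> = (\<Sum>b\<in>{k-j..k-1}. Mi (k+m-j-1-b) b j)"
    using assms by (intro sum.cong refl) (subst Mi_pascal, simp)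
  finally show ?thesis unfolding Tf_def by (simp add: algebra_simps)
qed

lemma idT:
  assumes "0 \<le> j"
  shows "Tf k m j - Tf (k-1) m j - Tf k (m-1) j - Tf (k-1) m (j-1) = Vf k m j"
proof (cases "j = 0")
  case True then show ?thesis by (simp add: Tf_def Vf_def Mi_def)
next
  case False
  have 1: "Tf (k-1) m j = (\<Sum>b\<in>{k-j..k-1}. Mi (k+m-j-b) (b-1) j)"
    unfolding Tf_def by (subst sum_shift_int) (simp add: algebra_simps)
  have 2: "Tf k (m-1) j = (\<Sum>b\<in>{k-j..k-1}. Mi (k+m-j-b-1) b j)"
    unfolding Tf_def by (simp add: algebra_simps)
  have "Tf k m j - Tf (k-1) m j - Tf k (m-1) j =
     (\<Sum>b\<in>{k-j..k-1}. Mi (k+m-j-b) b j - Mi (k+m-j-b) (b-1) j - Mi (k+m-j-b-1) b j)"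
    unfolding 1 2 by (simp add: Tf_def sum_subtractf)
  also have "\<dots> = (\<Sum>b\<in>{k-j..k-1}. Mi (k+m-j-b) b (j-1))"
    using False by (intro sum.cong refl) (subst Mi_pascal, simp)
  also have "{k-j..k-1} = insert (k-1) {k-j..k-2}" using assms False by auto
  also have "(\<Sum>b\<in>insert (k-1) {k-j..k-2}. Mi (k+m-j-b) b (j-1)) =
      Mi (m-j+1) (k-1) (j-1) + (\<Sum>b\<in>{k-j..k-2}. Mi (k+m-j-b) b (j-1))"
    by (subst sum.insert) (auto simp: algebra_simps)
  also have "(\<Sum>b\<in>{k-j..k-2}. Mi (k+m-j-b) b (j-1)) = Tf (k-1) m (j-1)"
    unfolding Tf_def by (simp add: algebra_simps)
  finally show ?thesis unfolding Vf_def by simp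
qed

lemma idV: "Vf k m j - Vf (k-1) m j - Vf k (m-1) j - Vf k (m-1) (j-1) = Df k m j"
  unfolding Vf_def Df_def
  by (subst Mi_pascal[of "m-j+1"]) (auto simp: algebra_simps)

definition mk3 :: "(int \<Rightarrow> int \<Rightarrow> int \<Rightarrow> int) \<Rightarrow> int fps fps fps" where
  "mk3 f = Abs_fps (\<lambda>k. Abs_fps (\<lambda>m. Abs_fps (\<lambda>j. f (int k) (int m) (int j))))"

abbreviation nth3 :: "int fps fps fps \<Rightarrow> nat \<Rightarrow> nat \<Rightarrow> nat \<Rightarrow> int" where
  "nth3 A k m j \<equiv> fps_nth (fps_nth (fps_nth A k) m) j"

lemma mk3_nth[simp]: "nth3 (mk3 f) k m j = f (int k) (int m) (int j)"
  by (simp add: mk3_def)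

lemma fps3_eqI: "(\<And>k m j. nth3 A k m j = nth3 B k m j) \<Longrightarrow> A = B"
  by (intro fps_ext) simp

definition vanish :: "(int \<Rightarrow> int \<Rightarrow> int \<Rightarrow> int) \<Rightarrow> bool" where
  "vanish f \<longleftrightarrow> (\<forall>k m j. k < 0 \<or> m < 0 \<or> j < 0 \<longrightarrow> f k m j = 0)"

lemma mk3_x: "vanish f \<Longrightarrow> mk3 f * fps_x = mk3 (\<lambda>k m j. f (k-1) m j)"
  by (rule fps3_eqI) (auto simp: fps_x_def mult.commute[of _ fps_X] vanish_def of_nat_diff)

lemma mk3_y: "vanish f \<Longrightarrow> mk3 f * fps_y = mk3 (\<lambda>k m j. f k (m-1) j)"
  by (rule fps3_eqI) (auto simp: fps_y_def mult.commute[of _ "fps_const _"] mult.commute[of _ fps_X] vanish_def of_nat_diff)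

lemma mk3_t: "vanish f \<Longrightarrow> mk3 f * fps_t = mk3 (\<lambda>k m j. f k m (j-1))"
  by (rule fps3_eqI) (auto simp: fps_t_def mult.commute[of _ "fps_const _"] mult.commute[of _ fps_X] vanish_def of_nat_diff)

lemma mk3_diff: "mk3 f - mk3 g = mk3 (\<lambda>k m j. f k m j - g k m j)"
  by (rule fps3_eqI) simp

lemma mk3_cong: "(\<And>k m j. 0 \<le> k \<Longrightarrow> 0 \<le> m \<Longrightarrow> 0 \<le> j \<Longrightarrow> f k m j = g k m j) \<Longrightarrow> mk3 f = mk3 g"
  by (rule fps3_eqI) simp

lemma mk3_one: "(1 :: int fps fps fps) = mk3 (\<lambda>k m j. if k = 0 \<and> m = 0 \<and> j = 0 then 1 else 0)"
  by (rule fps3_eqI) (simp add: fps_one_nth)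

lemma vanish_shift:
  "vanish f \<Longrightarrow> vanish (\<lambda>k m j. f (k-1) m j)"
  "vanish f \<Longrightarrow> vanish (\<lambda>k m j. f k (m-1) j)"
  "vanish f \<Longrightarrow> vanish (\<lambda>k m j. f k m (j-1))"
  by (auto simp: vanish_def)

lemma vanish_T: "vanish Tf"
  unfolding vanish_def Tf_def
  by (auto intro!: sum.neutral simp: Mi_def)

lemma vanish_U: "vanish Uf"
  unfolding vanish_def Uf_def
  by (auto intro!: sum.neutral simp: Mi_def)

lemma vanish_V: "vanish Vf"
  unfolding vanish_def Vf_def by (auto simp: Mi_def)

lemma vanish_TU: "vanish (\<lambda>k m j. Tf k m j + Uf k m j)"
  using vanish_T vanish_U by (auto simp: vanish_def)

lemma vanish_1: "vanish (\<lambda>k m j. if k = 0 \<and> m = 0 \<and> j = 0 then 1 else 0)"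
  by (auto simp: vanish_def)

lemma xt_eq: "fps_x * fps_t = mk3 Df"
proof -
  define e0 :: "int \<Rightarrow> int \<Rightarrow> int \<Rightarrow> int" where "e0 = (\<lambda>k m j. if k = 0 \<and> m = 0 \<and> j = 0 then 1 else 0)"
  have v: "vanish e0" unfolding e0_def by (rule vanish_1)
  have "fps_x * fps_t = mk3 e0 * fps_x * fps_t" unfolding e0_def mk3_one[symmetric] by simp
  also have "\<dots> = mk3 (\<lambda>k m j. e0 (k-1) m (j-1))"
    unfolding mk3_x[OF v] mk3_t[OF vanish_shift(1)[OF v]] ..
  also have "\<dots> = mk3 Df" by (rule mk3_cong) (auto simp: Df_def e0_def)
  finally show ?thesis .
qed

lemma step1: "mk3 (\<lambda>k m j. Tf k m j + Uf k m j) * (1 - fps_x - fps_y) = (1 - fps_x) * mk3 Tf"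
proof -
  let ?G = "mk3 (\<lambda>k m j. Tf k m j + Uf k m j)"
  have "?G * (1 - fps_x - fps_y) = ?G - ?G * fps_x - ?G * fps_y" by (simp add: algebra_simps)
  also have "\<dots> = mk3 (\<lambda>k m j. Tf k m j + Uf k m j - (Tf (k-1) m j + Uf (k-1) m j) - (Tf k (m-1) j + Uf k (m-1) j))"
    by (simp add: mk3_x mk3_y vanish_TU mk3_diff)
  also have "\<dots> = mk3 (\<lambda>k m j. Tf k m j - Tf (k-1) m j)"
  proof (rule mk3_cong)
    fix k m j :: int assume "0 \<le> j"
    then show "Tf k m j + Uf k m j - (Tf (k-1) m j + Uf (k-1) m j) - (Tf k (m-1) j + Uf k (m-1) j) = Tf k m j - Tf (k-1) m j"
      using idU[of j k m] by simp
  qed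
  also have "\<dots> = mk3 Tf - mk3 Tf * fps_x" by (simp add: mk3_x vanish_T mk3_diff)
  also have "\<dots> = (1 - fps_x) * mk3 Tf" by (simp add: algebra_simps)
  finally show ?thesis .
qed

lemma step2: "mk3 Tf * (1 - fps_x - fps_y - fps_x * fps_t) = mk3 Vf"
proof -
  have "mk3 Tf * (1 - fps_x - fps_y - fps_x * fps_t) = mk3 Tf - mk3 Tf * fps_x - mk3 Tf * fps_y - mk3 Tf * fps_x * fps_t"
    by (simp add: algebra_simps)
  also have "\<dots> = mk3 (\<lambda>k m j. Tf k m j - Tf (k-1) m j - Tf k (m-1) j - Tf (k-1) m (j-1))"
    by (simp add: mk3_x mk3_y mk3_t vanish_T vanish_shift mk3_diff)
  also have "\<dots> = mk3 Vf"
    by (rule mk3_cong) (simp add: idT)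
  finally show ?thesis .
qed

lemma step3: "mk3 Vf * (1 - fps_x - fps_y - fps_y * fps_t) = fps_x * fps_t"
proof -
  have "mk3 Vf * (1 - fps_x - fps_y - fps_y * fps_t) = mk3 Vf - mk3 Vf * fps_x - mk3 Vf * fps_y - mk3 Vf * fps_y * fps_t"
    by (simp add: algebra_simps)
  also have "\<dots> = mk3 (\<lambda>k m j. Vf k m j - Vf (k-1) m j - Vf k (m-1) j - Vf k (m-1) (j-1))"
    by (simp add: mk3_x mk3_y mk3_t vanish_V vanish_shift mk3_diff)
  also have "\<dots> = mk3 Df"
    by (rule mk3_cong) (simp add: idV)
  finally show ?thesis using xt_eq by simp
qed

lemma final_alg:
  assumes "face_gf = mk3 (\<lambda>k m j. Tf k m j + Uf k m j)"
  shows "face_gf * ((1 - fps_x - fps_y) * (1 - fps_x - fps_y - fps_x * fps_t)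
            * (1 - fps_x - fps_y - fps_y * fps_t))
         = (1 - fps_x) * fps_x * fps_t"
proof -
  have "face_gf * ((1 - fps_x - fps_y) * (1 - fps_x - fps_y - fps_x * fps_t)
            * (1 - fps_x - fps_y - fps_y * fps_t))
     = (((face_gf * (1 - fps_x - fps_y)) * (1 - fps_x - fps_y - fps_x * fps_t))
            * (1 - fps_x - fps_y - fps_y * fps_t))" by (simp add: mult.assoc)
  also have "\<dots> = (1 - fps_x) * ((mk3 Tf * (1 - fps_x - fps_y - fps_x * fps_t)) * (1 - fps_x - fps_y - fps_y * fps_t))"
    unfolding assms step1 by (simp add: mult.assoc)
  also have "\<dots> = (1 - fps_x) * (fps_x * fps_t)" unfolding step2 step3 ..
  finally show ?thesis by (simp add: mult.assoc)
qed

datatype con = Lo nat | Hi nat | SL | SU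

definition cons :: "nat \<Rightarrow> con set" where
  "cons n = Lo ` {..<n} \<union> Hi ` {..<n} \<union> {SL, SU}"

lemma finite_cons[simp]: "finite (cons n)" by (simp add: cons_def)

fun gf :: "nat \<Rightarrow> con \<Rightarrow> (nat \<Rightarrow> real) \<Rightarrow> real" where
  "gf n (Lo i) x = - x i"
| "gf n (Hi i) x = x i"
| "gf n SL x = - (\<Sum>i<n. x i)"
| "gf n SU x = (\<Sum>i<n. x i)"

fun cb :: "nat \<Rightarrow> con \<Rightarrow> real" where
  "cb k (Lo i) = 0"
| "cb k (Hi i) = 1"
| "cb k SL = 1 - real k"
| "cb k SU = real k"

lemma gf_lin: "gf n l (\<lambda>i. a * x i + b * y i) = a * gf n l x + b * gf n l y"
  by (cases l) (simp_all add: sum.distrib sum_distrib_left algebra_simps)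

lemma hyp_alt: "hypersimplex n k = {x. (\<forall>i\<ge>n. x i = 0) \<and> (\<forall>l\<in>cons n. gf n l x \<le> cb k l)}"
  unfolding hypersimplex_def cons_def by (auto simp: ball_Un Ball_image_comp o_def)

definition tight :: "nat \<Rightarrow> nat \<Rightarrow> (nat \<Rightarrow> real) \<Rightarrow> con set" where
  "tight n k x = {l \<in> cons n. gf n l x = cb k l}"

lemma finite_tight[simp]: "finite (tight n k x)"
  unfolding tight_def by simp

lemma ho_alt: "hypersimplex_ho n k = {x \<in> hypersimplex n k. SL \<notin> tight n k x}"
  unfolding hypersimplex_ho_def hypersimplex_def tight_def cons_def by auto

definition fc :: "nat \<Rightarrow> nat \<Rightarrow> con set \<Rightarrow> (nat \<Rightarrow> real) set" where
  "fc n k \<tau> = {x \<in> hypersimplex n k. \<tau> \<subseteq> tight n k x}"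

lemma comb_in:
  assumes "x \<in> hypersimplex n k" "y \<in> hypersimplex n k" "0 \<le> u" "u \<le> 1"
  shows "(\<lambda>i. (1-u) * x i + u * y i) \<in> hypersimplex n k"
proof -
  have "gf n l (\<lambda>i. (1-u) * x i + u * y i) \<le> cb k l" if "l \<in> cons n" for l
  proof -
    have "gf n l x \<le> cb k l" "gf n l y \<le> cb k l" using assms that by (auto simp: hyp_alt)
    then have "(1-u) * gf n l x + u * gf n l y \<le> (1-u) * cb k l + u * cb k l"
      using assms by (intro add_mono mult_left_mono) auto
    then show ?thesis unfolding gf_lin by (simp add: algebra_simps)
  qed
  then show ?thesis using assms by (auto simp: hyp_alt)
qed

lemma comb_tight_eq:
  assumes "(1-u) * A + u * B = (c::real)" "A \<le> c" "B \<le> c" "0 < u" "u < 1"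
  shows "A = c \<and> B = c"
proof -
  have "(1-u) * A \<le> (1-u) * c" "u * B \<le> u * c" using assms by (auto intro: mult_left_mono)
  moreover have "(1-u) * c + u * c = c" by (simp add: algebra_simps)
  ultimately have "(1-u) * A = (1-u) * c" "u * B = u * c" using assms(1) by linarith+
  then show ?thesis using assms by auto
qed

lemma tight_comb:
  assumes "x \<in> hypersimplex n k" "y \<in> hypersimplex n k" "0 < u" "u < 1"
  shows "tight n k (\<lambda>i. (1-u) * x i + u * y i) = tight n k x \<inter> tight n k y"
proof -
  have "gf n l (\<lambda>i. (1-u) * x i + u * y i) = cb k l \<longleftrightarrow> gf n l x = cb k l \<and> gf n l y = cb k l"
    if "l \<in> cons n" for l
  proof -
    have "gf n l x \<le> cb k l" "gf n l y \<le> cb k l" using assms that by (auto simp: hyp_alt)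
    then show ?thesis unfolding gf_lin using comb_tight_eq[of u "gf n l x" "gf n l y" "cb k l"] assms
      by (auto simp: left_diff_distrib)
  qed
  then show ?thesis unfolding tight_def by auto
qed

lemma closed_seg_iff: "p \<in> closed_seg a b \<longleftrightarrow> (\<exists>u. 0 \<le> u \<and> u \<le> 1 \<and> p = (\<lambda>i. (1 - u) * a i + u * b i))"
  unfolding closed_seg_def by auto

lemma convex_fc: "convex_pt (fc n k \<tau>)"
  unfolding convex_pt_def
proof (intro ballI subsetI)
  fix a b p assume a: "a \<in> fc n k \<tau>" and b: "b \<in> fc n k \<tau>" and p: "p \<in> closed_seg a b"
  then obtain u where u: "0 \<le> u" "u \<le> 1" "p = (\<lambda>i. (1 - u) * a i + u * b i)"
    by (auto simp: closed_seg_iff)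
  have ah: "a \<in> hypersimplex n k" and bh: "b \<in> hypersimplex n k" using a b by (auto simp: fc_def)
  have ph: "p \<in> hypersimplex n k" using comb_in[OF ah bh u(1,2)] u(3) by simp
  have "\<tau> \<subseteq> tight n k p"
  proof
    fix l assume "l \<in> \<tau>"
    then have "l \<in> tight n k a" "l \<in> tight n k b" using a b by (auto simp: fc_def)
    then show "l \<in> tight n k p" unfolding tight_def u(3) gf_lin by (auto simp: left_diff_distrib)
  qed
  then show "p \<in> fc n k \<tau>" using ph by (simp add: fc_def)
qed

lemma face_prop_fc:
  assumes a: "a \<in> hypersimplex n k" and b: "b \<in> hypersimplex n k"
    and p: "p \<in> fc n k \<tau>" and ps: "p \<in> open_seg a b"
  shows "a \<in> fc n k \<tau> \<and> b \<in> fc n k \<tau>"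
proof -
  obtain u where u: "0 \<le> u" "u \<le> 1" "p = (\<lambda>i. (1 - u) * a i + u * b i)" and pa: "p \<noteq> a" "p \<noteq> b"
    using ps by (auto simp: open_seg_def closed_seg_iff)
  have "u \<noteq> 0" using pa u by auto
  moreover have "u \<noteq> 1" using pa u by auto
  ultimately have u01: "0 < u" "u < 1" using u by auto
  have "tight n k p = tight n k a \<inter> tight n k b" using tight_comb[OF a b u01] u(3) by simp
  then show ?thesis using p a b by (auto simp: fc_def)
qed

lemma is_face_fc: "is_face (fc n k \<tau>) (hypersimplex n k)"
  unfolding is_face_def
proof (intro conjI)
  show "fc n k \<tau> \<subseteq> hypersimplex n k" by (auto simp: fc_def)
  show "convex_pt (fc n k \<tau>)" by (rule convex_fc)
  show "\<forall>a\<in>hypersimplex n k. \<forall>b\<in>hypersimplex n k. \<forall>x\<in>fc n k \<tau>. x \<in> open_seg a b \<longrightarrow> a \<in> fc n k \<tau> \<and> b \<in> fc n k \<tau>"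
    using face_prop_fc by blast
qed

lemma face_min:
  assumes F: "is_face F (hypersimplex n k)" and ne: "F \<noteq> {}"
  obtains z where "z \<in> F" "\<And>x. x \<in> F \<Longrightarrow> tight n k z \<subseteq> tight n k x"
proof -
  obtain z0 where "z0 \<in> F" using ne by auto
  then obtain z where z: "z \<in> F" and zmin: "\<And>x. x \<in> F \<Longrightarrow> card (tight n k z) \<le> card (tight n k x)"
    using ex_has_least_nat[of "\<lambda>x. x \<in> F" z0 "\<lambda>x. card (tight n k x)"] by blast
  have FP: "F \<subseteq> hypersimplex n k" and cv: "convex_pt F" using F by (auto simp: is_face_def)
  have "tight n k z \<subseteq> tight n k x" if x: "x \<in> F" for x
  proof -
    let ?m = "\<lambda>i. (1 - 1/2) * z i + (1/2) * x i"
    have "?m \<in> closed_seg z x" unfolding closed_seg_iff by (rule exI[of _ "1/2"]) simp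
    moreover have "closed_seg z x \<subseteq> F" using cv z x unfolding convex_pt_def by blast
    ultimately have "?m \<in> F" by blast
    then have "card (tight n k z) \<le> card (tight n k ?m)" by (rule zmin)
    moreover have "tight n k ?m = tight n k z \<inter> tight n k x"
    proof -
      have "z \<in> hypersimplex n k" "x \<in> hypersimplex n k" using FP z x by auto
      from tight_comb[OF this, of "1/2"] show ?thesis by simp
    qed
    ultimately have "card (tight n k z) \<le> card (tight n k z \<inter> tight n k x)" by simp
    then have "tight n k z \<inter> tight n k x = tight n k z"
      by (intro card_seteq) auto
    then show ?thesis by auto
  qed
  then show ?thesis using z that by blast
qed

lemma face_eq:
  assumes F: "is_face F (hypersimplex n k)" and z: "z \<in> F"
    and zmin: "\<And>x. x \<in> F \<Longrightarrow> tight n k z \<subseteq> tight n k x"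
  shows "F = fc n k (tight n k z)"
proof
  show "F \<subseteq> fc n k (tight n k z)" using F zmin by (auto simp: fc_def is_face_def)
next
  have FP: "F \<subseteq> hypersimplex n k" using F by (auto simp: is_face_def)
  have zP: "z \<in> hypersimplex n k" using z FP by auto
  show "fc n k (tight n k z) \<subseteq> F"
  proof
    fix x assume x: "x \<in> fc n k (tight n k z)"
    have xP: "x \<in> hypersimplex n k" and tx: "tight n k z \<subseteq> tight n k x" using x by (auto simp: fc_def)
    show "x \<in> F"
    proof (cases "x = z")
      case True then show ?thesis using z by simp
    next
      case False
      define S where "S = cons n - tight n k z"
      define d where "d l = cb k l - gf n l z" for l
      define w where "w l = \<bar>gf n l z - gf n l x\<bar> + 1" for l
      define \<epsilon> where "\<epsilon> = Min (insert 1 ((\<lambda>l. d l / w l) ` S))"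
      have dpos: "d l > 0" if "l \<in> S" for l
        using that zP unfolding S_def d_def tight_def by (auto simp: hyp_alt)
      have wpos: "w l > 0" for l unfolding w_def by simp
      have fin: "finite (insert 1 ((\<lambda>l. d l / w l) ` S))" unfolding S_def by simp
      have epos: "\<epsilon> > 0" unfolding \<epsilon>_def using fin dpos wpos
        by (subst Min_gr_iff) auto
      have ele: "\<epsilon> \<le> d l / w l" if "l \<in> S" for l
        unfolding \<epsilon>_def using fin that by (intro Min_le) auto
      define y where "y = (\<lambda>i. (1 + \<epsilon>) * z i + (- \<epsilon>) * x i)"
      have yP: "y \<in> hypersimplex n k"
        unfolding hyp_alt
      proof (intro CollectI conjI allI impI ballI)
        fix i assume "n \<le> i" then show "y i = 0" using xP zP by (simp add: y_def hyp_alt)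
      next
        fix l assume l: "l \<in> cons n"
        have gy: "gf n l y = (1 + \<epsilon>) * gf n l z + (- \<epsilon>) * gf n l x" unfolding y_def gf_lin ..
        show "gf n l y \<le> cb k l"
        proof (cases "l \<in> tight n k z")
          case True
          then have "gf n l z = cb k l" "gf n l x = cb k l" using tx by (auto simp: tight_def)
          then show ?thesis unfolding gy by (simp add: algebra_simps)
        next
          case False
          then have lS: "l \<in> S" using l by (simp add: S_def)
          have "\<epsilon> * w l \<le> d l" using ele[OF lS] wpos[of l] by (simp add: field_simps)
          moreover have "\<epsilon> * (gf n l z - gf n l x) \<le> \<epsilon> * w l"
            using epos unfolding w_def by (intro mult_left_mono) auto
          ultimately show ?thesis unfolding gy d_def by (simp add: algebra_simps)
        qed
      qed
      define u where "u = 1 / (1 + \<epsilon>)"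
      have u01: "0 \<le> u" "u \<le> 1" using epos by (auto simp: u_def)
      have zc: "z = (\<lambda>i. (1 - u) * x i + u * y i)"
      proof
        fix i
        have "(1 - u) * x i + u * y i = (1 - u * (1 + \<epsilon>)) * x i + u * (1 + \<epsilon>) * z i"
          unfolding y_def by (simp add: algebra_simps)
        also have "u * (1 + \<epsilon>) = 1" using epos by (simp add: u_def)
        finally show "z i = (1 - u) * x i + u * y i" by simp
      qed
      have zy: "z \<noteq> y"
      proof
        assume "z = y"
        have "z i = x i" for i
        proof -
          have "z i = y i" using \<open>z = y\<close> by simp
          then have "z i = z i + \<epsilon> * z i - \<epsilon> * x i" by (simp add: y_def algebra_simps)
          then have "\<epsilon> * z i = \<epsilon> * x i" by linarith
          then show ?thesis using epos by simp
        qed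
        then show False using False by auto
      qed
      have "z \<in> closed_seg x y" unfolding closed_seg_iff using zc u01 by blast
      then have zo: "z \<in> open_seg x y" unfolding open_seg_def using zy False by auto
      have "\<forall>a\<in>hypersimplex n k. \<forall>b\<in>hypersimplex n k. \<forall>p\<in>F. p \<in> open_seg a b \<longrightarrow> a \<in> F \<and> b \<in> F"
        using F by (simp add: is_face_def)
      then show ?thesis using xP yP z zo by blast
    qed
  qed
qed

interpretation pt: vector_space pt_scale by (rule vector_space_pt)

lemma sum_fun_apply: "(sum f A) x = sum (\<lambda>a. f a x) A" for f :: "'b \<Rightarrow> nat \<Rightarrow> real"
  by (induct A rule: infinite_finite_induct) auto

definition ee :: "nat \<Rightarrow> nat \<Rightarrow> real" where "ee i = (\<lambda>l. if l = i then 1 else 0)"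

lemma indep_family:
  assumes fin: "finite I" and d: "\<And>i. i \<in> I \<Longrightarrow> w i i = 1"
    and o: "\<And>i l. i \<in> I \<Longrightarrow> l \<in> I \<Longrightarrow> l \<noteq> i \<Longrightarrow> w i l = 0"
  shows "pt.independent (w ` I)" "inj_on w I"
proof -
  show inj: "inj_on w I"
  proof (rule inj_onI)
    fix i i' assume "i \<in> I" "i' \<in> I" "w i = w i'"
    then have "w i' i = 1" using d by metis
    then show "i = i'" using o[of i' i] \<open>i \<in> I\<close> \<open>i' \<in> I\<close> by (cases "i = i'") auto
  qed
  show "pt.independent (w ` I)"
    unfolding pt.dependent_explicit
  proof clarify
    fix T u v assume T: "finite T" "T \<subseteq> w ` I" and s: "(\<Sum>v\<in>T. pt_scale (u v) v) = 0"
      and v: "v \<in> T" "u v \<noteq> 0"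
    obtain i0 where i0: "i0 \<in> I" "v = w i0" using v T by auto
    have "0 = (\<Sum>v\<in>T. pt_scale (u v) v) i0" using s by simp
    also have "\<dots> = (\<Sum>v'\<in>T. u v' * v' i0)" by (simp add: sum_fun_apply pt_scale_def)
    also have "\<dots> = u v * v i0 + (\<Sum>v'\<in>T - {v}. u v' * v' i0)"
      using T v by (simp add: sum.remove)
    also have "(\<Sum>v'\<in>T - {v}. u v' * v' i0) = 0"
    proof (rule sum.neutral, rule ballI)
      fix v' assume v': "v' \<in> T - {v}"
      then obtain i where i: "i \<in> I" "v' = w i" using T by auto
      then have "i \<noteq> i0" using v' i0 by auto
      then show "u v' * v' i0 = 0" using o[of i i0] i i0 by simp
    qed
    finally have "u v = 0" using d[OF i0(1)] i0 by simp
    then show False using v by simp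
  qed
qed

lemma tight_sub_iff:
  "tight n k z \<subseteq> tight n k x \<longleftrightarrow> (\<forall>i<n. z i = 0 \<longrightarrow> x i = 0) \<and> (\<forall>i<n. z i = 1 \<longrightarrow> x i = 1) \<and>
     ((\<Sum>i<n. z i) = real k \<longrightarrow> (\<Sum>i<n. x i) = real k) \<and>
     ((\<Sum>i<n. z i) = real k - 1 \<longrightarrow> (\<Sum>i<n. x i) = real k - 1)"
  unfolding tight_def cons_def by (auto simp: subset_iff)

lemma SU_tight: "SU \<in> tight n k z \<longleftrightarrow> (\<Sum>i<n. z i) = real k"
  unfolding tight_def cons_def by auto

lemma SL_tight: "SL \<in> tight n k z \<longleftrightarrow> (\<Sum>i<n. z i) = real k - 1"
  unfolding tight_def cons_def by auto

lemma fc_mem: "x \<in> fc n k \<tau> \<longleftrightarrow> x \<in> hypersimplex n k \<and> \<tau> \<subseteq> tight n k x"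
  unfolding fc_def by simp

lemma sum_ee: "i < n \<Longrightarrow> (\<Sum>l<n. ee i l) = 1"
  unfolding ee_def by (simp add: sum.delta)

lemma diff_support:
  assumes zP: "z \<in> hypersimplex n k"
    and x: "x \<in> fc n k (tight n k z)" and y: "y \<in> fc n k (tight n k z)"
    and l: "l \<notin> {i. i<n \<and> 0 < z i \<and> z i < 1}"
  shows "x l - y l = 0"
proof (cases "l < n")
  case True
  have "z l = 0 \<or> z l = 1" using zP l True by (force simp: hypersimplex_def)
  then show ?thesis using x y True by (auto simp: fc_mem tight_sub_iff)
next
  case False
  then show ?thesis using x y by (auto simp: fc_mem hypersimplex_def)
qed

lemma diff_sum:
  assumes "SU \<in> tight n k z" and x: "x \<in> fc n k (tight n k z)" and y: "y \<in> fc n k (tight n k z)"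
  shows "(\<Sum>l<n. x l - y l) = 0"
  using assms by (auto simp: fc_mem tight_sub_iff SU_tight sum_subtractf)

lemma dim_face:
  assumes zP: "z \<in> hypersimplex n k" and nSL: "SL \<notin> tight n k z"
  shows "aff_dim_pt (fc n k (tight n k z)) =
     int (if SU \<in> tight n k z then card {i. i<n \<and> 0 < z i \<and> z i < 1} - 1
          else card {i. i<n \<and> 0 < z i \<and> z i < 1})"
proof -
  define C where "C = {i. i<n \<and> 0 < z i \<and> z i < 1}"
  define F where "F = fc n k (tight n k z)"
  define D where "D = {x - y | x y. x \<in> F \<and> y \<in> F}"
  have finC: "finite C" unfolding C_def by simp
  have Cn: "C \<subseteq> {..<n}" unfolding C_def by auto
  have zF: "z \<in> F" using zP by (simp add: F_def fc_mem)
  have aff: "aff_dim_pt F = int (pt.dim D)"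
    using zF unfolding aff_dim_pt_def D_def by auto
  have zsum: "real k - 1 \<le> (\<Sum>i<n. z i)" "(\<Sum>i<n. z i) \<le> real k"
    using zP by (auto simp: hypersimplex_def)
  have zsum': "(\<Sum>i<n. z i) \<noteq> real k - 1" using nSL by (simp add: SL_tight)
  have z01: "0 \<le> z i" "z i \<le> 1" if "i < n" for i using zP that by (auto simp: hypersimplex_def)
  have z0: "z i = 0" if "i \<ge> n" for i using zP that by (auto simp: hypersimplex_def)
  have supp: "v l = 0" if "v \<in> D" "l \<notin> C" for v l
    using that diff_support[OF zP] unfolding D_def F_def C_def by auto
  show ?thesis
  proof (cases "SU \<in> tight n k z")
    case False
    define E where "E = ee ` C"
    have ind: "pt.independent E" "inj_on ee C"
      unfolding E_def by (rule indep_family[OF finC]; simp add: ee_def)+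
    have zlt: "(\<Sum>i<n. z i) < real k" using False zsum by (simp add: SU_tight)
    have ES: "E \<subseteq> pt.span D"
    proof
      fix v assume "v \<in> E"
      then obtain i where i: "i \<in> C" "v = ee i" unfolding E_def by auto
      have iC: "i < n" "0 < z i" "z i < 1" using i unfolding C_def by auto
      define \<epsilon> where "\<epsilon> = min (1 - z i) (real k - (\<Sum>i<n. z i))"
      have epos: "\<epsilon> > 0" using iC zlt by (simp add: \<epsilon>_def)
      define w where "w = (\<lambda>l. z l + \<epsilon> * ee i l)"
      have wsum: "(\<Sum>l<n. w l) = (\<Sum>l<n. z l) + \<epsilon>"
        unfolding w_def by (simp add: sum.distrib sum_distrib_left[symmetric] sum_ee iC)
      have wP: "w \<in> hypersimplex n k"
        unfolding hypersimplex_def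
      proof (intro CollectI conjI allI impI)
        fix l assume "l < n"
        then show "0 \<le> w l" "w l \<le> 1" using z01[of l] epos iC
          by (auto simp: w_def ee_def \<epsilon>_def)
      next
        fix l assume "n \<le> l" then show "w l = 0" using z0[of l] iC by (auto simp: w_def ee_def)
      next
        show "real k - 1 \<le> (\<Sum>l<n. w l)" using wsum zsum epos by simp
        show "(\<Sum>l<n. w l) \<le> real k" using wsum by (simp add: \<epsilon>_def)
      qed
      have wF: "w \<in> F"
        unfolding F_def fc_mem tight_sub_iff using wP iC zsum' zlt
        by (auto simp: w_def ee_def)
      have "w - z \<in> D" unfolding D_def using wF zF by blast
      then have "pt_scale (1/\<epsilon>) (w - z) \<in> pt.span D" by (intro pt.span_scale pt.span_base)
      moreover have "pt_scale (1/\<epsilon>) (w - z) = v"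
        using epos by (auto simp: pt_scale_def w_def i ee_def)
      ultimately show "v \<in> pt.span D" by simp
    qed
    have DS: "D \<subseteq> pt.span E"
    proof
      fix v assume v: "v \<in> D"
      have "v = (\<Sum>i\<in>C. pt_scale (v i) (ee i))"
      proof
        fix l
        have "(\<Sum>i\<in>C. pt_scale (v i) (ee i)) l = (\<Sum>i\<in>C. v i * ee i l)"
          by (simp add: sum_fun_apply pt_scale_def)
        also have "\<dots> = (if l \<in> C then v l else 0)"
          unfolding ee_def using finC by (simp add: sum.delta' if_distrib[of "\<lambda>x. _ * x"] cong: if_cong)
        also have "\<dots> = v l" using supp[OF v, of l] by auto
        finally show "v l = (\<Sum>i\<in>C. pt_scale (v i) (ee i)) l" by simp
      qed
      also have "\<dots> \<in> pt.span E"
        by (intro pt.span_sum pt.span_scale pt.span_base) (auto simp: E_def)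
      finally show "v \<in> pt.span E" .
    qed
    have "pt.dim D = card E"
      by (rule pt.dim_eq_card) (use ES DS ind in \<open>auto simp: pt.span_eq\<close>)
    also have "card E = card C" unfolding E_def using ind by (simp add: card_image)
    finally show ?thesis using False aff by (simp add: F_def C_def)
  next
    case True
    define i0 where "i0 = (SOME i. i \<in> C)"
    define I where "I = C - {i0}"
    define E where "E = (\<lambda>i. ee i - ee i0) ` I"
    have finI: "finite I" unfolding I_def using finC by simp
    have ind: "pt.independent E" "inj_on (\<lambda>i. ee i - ee i0) I"
      unfolding E_def by (rule indep_family[OF finI]; auto simp: ee_def I_def)+
    have zk: "(\<Sum>i<n. z i) = real k" using True by (simp add: SU_tight)
    have ES: "E \<subseteq> pt.span D"
    proof
      fix v assume "v \<in> E"
      then obtain i where i: "i \<in> I" "v = ee i - ee i0" unfolding E_def by auto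
      have "C \<noteq> {}" using i unfolding I_def by auto
      then have i0C: "i0 \<in> C" unfolding i0_def by (simp add: some_in_eq)
      have iC: "i < n" "0 < z i" "z i < 1" "i \<noteq> i0" using i unfolding C_def I_def by auto
      have i0c: "i0 < n" "0 < z i0" "z i0 < 1" using i0C unfolding C_def by auto
      define \<epsilon> where "\<epsilon> = min (1 - z i) (z i0)"
      have epos: "\<epsilon> > 0" using iC i0c by (simp add: \<epsilon>_def)
      define w where "w = (\<lambda>l. z l + \<epsilon> * (ee i l - ee i0 l))"
      have wsum: "(\<Sum>l<n. w l) = (\<Sum>l<n. z l)"
        unfolding w_def by (simp add: sum.distrib sum_distrib_left[symmetric] sum_subtractf sum_ee iC i0c)
      have wP: "w \<in> hypersimplex n k"
        unfolding hypersimplex_def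
      proof (intro CollectI conjI allI impI)
        fix l assume "l < n"
        then show "0 \<le> w l" "w l \<le> 1" using z01[of l] epos iC i0c
          by (auto simp: w_def ee_def \<epsilon>_def)
      next
        fix l assume "n \<le> l" then show "w l = 0" using z0[of l] iC i0c by (auto simp: w_def ee_def)
      next
        show "real k - 1 \<le> (\<Sum>l<n. w l)" using wsum zsum by simp
        show "(\<Sum>l<n. w l) \<le> real k" using wsum zsum by simp
      qed
      have wF: "w \<in> F"
        unfolding F_def fc_mem tight_sub_iff using wP iC i0c wsum
        by (auto simp: w_def ee_def)
      have "w - z \<in> D" unfolding D_def using wF zF by blast
      then have "pt_scale (1/\<epsilon>) (w - z) \<in> pt.span D" by (intro pt.span_scale pt.span_base)
      moreover have "pt_scale (1/\<epsilon>) (w - z) = v"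
        using epos by (auto simp: pt_scale_def w_def i ee_def)
      ultimately show "v \<in> pt.span D" by simp
    qed
    have DS: "D \<subseteq> pt.span E"
    proof
      fix v assume v: "v \<in> D"
      then obtain x y where xy: "v = x - y" "x \<in> F" "y \<in> F" unfolding D_def by auto
      have sv: "(\<Sum>l<n. v l) = 0" using diff_sum[OF True] xy unfolding F_def by simp
      have sC: "(\<Sum>l\<in>C. v l) = 0"
      proof -
        have "(\<Sum>l\<in>C. v l) = (\<Sum>l<n. v l)"
          by (rule sum.mono_neutral_left) (use Cn supp[OF v] in auto)
        then show ?thesis using sv by simp
      qed
      have sI: "(\<Sum>l\<in>I. v l) = - (if i0 \<in> C then v i0 else 0)"
        unfolding I_def using sC finC by (simp add: sum_diff1)
      have "v = (\<Sum>i\<in>I. pt_scale (v i) (ee i - ee i0))"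
      proof
        fix l
        have "(\<Sum>i\<in>I. pt_scale (v i) (ee i - ee i0)) l = (\<Sum>i\<in>I. v i * ee i l) - (\<Sum>i\<in>I. v i) * ee i0 l"
          by (simp add: sum_fun_apply pt_scale_def right_diff_distrib sum_subtractf sum_distrib_right)
        also have "(\<Sum>i\<in>I. v i * ee i l) = (if l \<in> I then v l else 0)"
          unfolding ee_def using finI by (simp add: sum.delta' if_distrib[of "\<lambda>x. _ * x"] cong: if_cong)
        finally have eq: "(\<Sum>i\<in>I. pt_scale (v i) (ee i - ee i0)) l =
            (if l \<in> I then v l else 0) - (\<Sum>i\<in>I. v i) * ee i0 l" .
        show "v l = (\<Sum>i\<in>I. pt_scale (v i) (ee i - ee i0)) l"
          unfolding eq sI using supp[OF v, of l] by (auto simp: I_def ee_def)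
      qed
      also have "\<dots> \<in> pt.span E"
        by (intro pt.span_sum pt.span_scale pt.span_base) (auto simp: E_def)
      finally show "v \<in> pt.span E" .
    qed
    have "pt.dim D = card E"
      by (rule pt.dim_eq_card) (use ES DS ind in \<open>auto simp: pt.span_eq\<close>)
    also have "card E = card I" unfolding E_def using ind by (simp add: card_image)
    also have "card I = card C - 1"
    proof (cases "C = {}")
      case True then show ?thesis by (simp add: I_def)
    next
      case False
      then have "i0 \<in> C" unfolding i0_def by (simp add: some_in_eq)
      then show ?thesis unfolding I_def using finC by simp
    qed
    finally show ?thesis using True aff by (simp add: F_def C_def)
  qed
qed

definition tauBC :: "nat \<Rightarrow> nat set \<Rightarrow> nat set \<Rightarrow> bool \<Rightarrow> con set" where
  "tauBC n B C u = Lo ` ({..<n} - B - C) \<union> Hi ` B \<union> (if u then {SU} else {})"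

definition ptBC :: "nat \<Rightarrow> nat set \<Rightarrow> nat set \<Rightarrow> bool \<Rightarrow> nat \<Rightarrow> real" where
  "ptBC k B C u = (let s = (if u then (real k - real (card B)) / real (card C)
                       else (real k - 1/2 - real (card B)) / real (card C))
                   in (\<lambda>i. (if i \<in> B then 1 else 0) + (if i \<in> C then s else 0)))"

definition Rset :: "nat \<Rightarrow> nat \<Rightarrow> nat \<Rightarrow> (nat set \<times> nat set \<times> bool) set" where
  "Rset n k j = {(B, C, u). B \<subseteq> {..<n} \<and> C \<subseteq> {..<n} \<and> B \<inter> C = {} \<and>
     (if u then card C = j + 1 \<and> card B < k \<and> k < card B + card C
      else card C = j \<and> card B + 1 \<le> k \<and> k \<le> card B + card C)}"

lemma sum_split_BC:
  fixes n :: nat and f :: "nat \<Rightarrow> real"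
  assumes "B \<subseteq> {..<n}" "C \<subseteq> {..<n}" "B \<inter> C = {}"
  shows "(\<Sum>i<n. (if i \<in> B then 1 else 0) + (if i \<in> C then f i else 0)) = real (card B) + (\<Sum>i\<in>C. f i)"
proof -
  have "(\<Sum>i<n. (if i \<in> B then 1 else 0) + (if i \<in> C then f i else 0))
      = (\<Sum>i<n. (if i \<in> B then 1 else 0)) + (\<Sum>i<n. (if i \<in> C then f i else 0))"
    by (simp add: sum.distrib)
  also have "(\<Sum>i<n. (if i \<in> B then 1 else 0 :: real)) = (\<Sum>i\<in>{..<n} \<inter> B. 1)"
    using sum.inter_restrict[of "{..<n}" "\<lambda>_. 1::real" B] by simp
  also have "{..<n} \<inter> B = B" using assms by auto
  also have "(\<Sum>i<n. (if i \<in> C then f i else 0)) = (\<Sum>i\<in>{..<n} \<inter> C. f i)"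
    using sum.inter_restrict[of "{..<n}" f C] by simp
  also have "{..<n} \<inter> C = C" using assms by auto
  finally show ?thesis by simp
qed

lemma realize:
  assumes R: "(B, C, u) \<in> Rset n k j" and j: "1 \<le> j"
  defines "z \<equiv> ptBC k B C u"
  shows "z \<in> hypersimplex n k" "tight n k z = tauBC n B C u" "SL \<notin> tight n k z"
    "{i. i < n \<and> 0 < z i \<and> z i < 1} = C"
proof -
  have BC: "B \<subseteq> {..<n}" "C \<subseteq> {..<n}" "B \<inter> C = {}" using R by (auto simp: Rset_def)
  have finC: "finite C" using BC finite_subset by blast
  define s where "s = (if u then (real k - real (card B)) / real (card C)
                       else (real k - 1/2 - real (card B)) / real (card C))"
  have zdef: "z = (\<lambda>i. (if i \<in> B then 1 else 0) + (if i \<in> C then s else 0))"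
    unfolding z_def ptBC_def s_def Let_def ..
  have cpos: "card C > 0" using R j by (auto simp: Rset_def split: if_splits)
  have s01: "0 < s" "s < 1"
  proof -
    have "(if u then card B < k \<and> k < card B + card C else card B + 1 \<le> k \<and> k \<le> card B + card C)"
      using R by (auto simp: Rset_def split: if_splits)
    then have "0 < s \<and> s < 1" using cpos
      by (cases u) (auto simp: s_def field_simps)
    then show "0 < s" "s < 1" by auto
  qed
  have zsum: "(\<Sum>i<n. z i) = (if u then real k else real k - 1/2)"
  proof -
    have "(\<Sum>i<n. z i) = real (card B) + (\<Sum>i\<in>C. s)" unfolding zdef by (rule sum_split_BC[OF BC])
    also have "\<dots> = real (card B) + real (card C) * s" by simp
    also have "\<dots> = (if u then real k else real k - 1/2)" using cpos by (auto simp: s_def)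
    finally show ?thesis .
  qed
  have zi: "z i = (if i \<in> B then 1 else if i \<in> C then s else 0)" for i
    using BC unfolding zdef by auto
  show zP: "z \<in> hypersimplex n k"
    unfolding hypersimplex_def using zsum s01 BC zi by (auto simp: zi)
  show C: "{i. i < n \<and> 0 < z i \<and> z i < 1} = C"
    using s01 BC by (auto simp: zi)
  show tz: "tight n k z = tauBC n B C u"
  proof (rule set_eqI)
    fix l show "l \<in> tight n k z \<longleftrightarrow> l \<in> tauBC n B C u"
      using s01 BC zsum unfolding tight_def cons_def tauBC_def
      by (cases l) (auto simp: zi)
  qed
  show "SL \<notin> tight n k z" unfolding tz tauBC_def by auto
qed

lemma tauBC_inj:
  assumes "B1 \<inter> C1 = {}" "C1 \<subseteq> {..<n}" "B2 \<inter> C2 = {}" "C2 \<subseteq> {..<n}"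
    and eq: "tauBC n B1 C1 u1 = tauBC n B2 C2 u2"
  shows "B1 = B2 \<and> C1 = C2 \<and> u1 = u2"
proof -
  have B: "i \<in> B \<longleftrightarrow> Hi i \<in> tauBC n B C u" for i B C u by (auto simp: tauBC_def)
  have U: "u \<longleftrightarrow> SU \<in> tauBC n B C u" for B C u by (auto simp: tauBC_def)
  have L: "Lo i \<in> tauBC n B C u \<longleftrightarrow> i < n \<and> i \<notin> B \<and> i \<notin> C" for i B C u by (auto simp: tauBC_def)
  have b: "B1 = B2" using eq B by blast
  have u: "u1 = u2" using eq U by blast
  have "C1 = C2"
  proof
    show "C1 \<subseteq> C2"
    proof
      fix i assume i: "i \<in> C1"
      then have "Lo i \<notin> tauBC n B1 C1 u1" using L by blast
      then have "Lo i \<notin> tauBC n B2 C2 u2" using eq by simp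
      moreover have "i < n" "i \<notin> B2" using i assms(1,2) b by auto
      ultimately show "i \<in> C2" using L by blast
    qed
  next
    show "C2 \<subseteq> C1"
    proof
      fix i assume i: "i \<in> C2"
      then have "Lo i \<notin> tauBC n B2 C2 u2" using L by blast
      then have "Lo i \<notin> tauBC n B1 C1 u1" using eq by simp
      moreover have "i < n" "i \<notin> B1" using i assms(3,4) b by auto
      ultimately show "i \<in> C1" using L by blast
    qed
  qed
  then show ?thesis using b u by simp
qed

definition phi :: "nat \<Rightarrow> nat \<Rightarrow> nat set \<times> nat set \<times> bool \<Rightarrow> (nat \<Rightarrow> real) set" where
  "phi n k = (\<lambda>(B, C, u). fc n k (tauBC n B C u) \<inter> hypersimplex_ho n k)"

lemma phi_inj:
  assumes j: "1 \<le> j"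
  shows "inj_on (phi n k) (Rset n k j)"
proof (rule inj_onI)
  fix p q assume p: "p \<in> Rset n k j" and q: "q \<in> Rset n k j" and eqpq: "phi n k p = phi n k q"
  obtain B1 C1 u1 where p1: "p = (B1, C1, u1)" by (cases p) auto
  obtain B2 C2 u2 where q2: "q = (B2, C2, u2)" by (cases q) auto
  have R1: "(B1, C1, u1) \<in> Rset n k j" and R2: "(B2, C2, u2) \<in> Rset n k j"
    and eq: "phi n k (B1, C1, u1) = phi n k (B2, C2, u2)" using p q eqpq p1 q2 by auto
  have sub: "tauBC n B2 C2 u2 \<subseteq> tauBC n B1 C1 u1"
    if R1: "(B1, C1, u1) \<in> Rset n k j" and R2: "(B2, C2, u2) \<in> Rset n k j"
      and eq: "phi n k (B1, C1, u1) = phi n k (B2, C2, u2)" for B1 C1 u1 B2 C2 u2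
  proof -
    let ?z = "ptBC k B1 C1 u1"
    note r = realize[OF R1 j]
    have "?z \<in> phi n k (B1, C1, u1)"
      using r by (simp add: phi_def fc_mem ho_alt)
    then have "?z \<in> phi n k (B2, C2, u2)" using eq by simp
    then have "?z \<in> fc n k (tauBC n B2 C2 u2)" by (simp add: phi_def)
    then show ?thesis using r by (simp add: fc_mem)
  qed
  have et: "tauBC n B1 C1 u1 = tauBC n B2 C2 u2"
    using sub[OF R1 R2 eq] sub[OF R2 R1 eq[symmetric]] by blast
  have "B1 \<inter> C1 = {}" "C1 \<subseteq> {..<n}" "B2 \<inter> C2 = {}" "C2 \<subseteq> {..<n}"
    using R1 R2 by (auto simp: Rset_def)
  from tauBC_inj[OF this et] show "p = q" by (simp add: p1 q2)
qed

lemma GS_eq: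
  assumes j: "1 \<le> j"
  shows "{G. \<exists>F. is_face F (hypersimplex n k) \<and> aff_dim_pt F = int j \<and>
      G = F \<inter> hypersimplex_ho n k \<and> G \<noteq> {}} = phi n k ` Rset n k j"
proof (rule set_eqI, rule iffI)
  fix G assume "G \<in> {G. \<exists>F. is_face F (hypersimplex n k) \<and> aff_dim_pt F = int j \<and>
      G = F \<inter> hypersimplex_ho n k \<and> G \<noteq> {}}"
  then obtain F where F: "is_face F (hypersimplex n k)" and dF: "aff_dim_pt F = int j"
    and G: "G = F \<inter> hypersimplex_ho n k" and Gne: "G \<noteq> {}" by auto
  have "F \<noteq> {}" using G Gne by auto
  then obtain z where z: "z \<in> F" and zmin: "\<And>x. x \<in> F \<Longrightarrow> tight n k z \<subseteq> tight n k x"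
    using face_min[OF F] by blast
  have Feq: "F = fc n k (tight n k z)" by (rule face_eq[OF F z zmin])
  have zP: "z \<in> hypersimplex n k" using z F by (auto simp: is_face_def)
  obtain w where w: "w \<in> G" using Gne by auto
  have nSL: "SL \<notin> tight n k z" using w G zmin[of w] by (auto simp: ho_alt)
  define B where "B = {i. i < n \<and> z i = 1}"
  define C where "C = {i. i < n \<and> 0 < z i \<and> z i < 1}"
  define u where "u = (SU \<in> tight n k z)"
  have z01: "0 \<le> z i" "z i \<le> 1" if "i < n" for i using zP that by (auto simp: hypersimplex_def)
  have BC: "B \<subseteq> {..<n}" "C \<subseteq> {..<n}" "B \<inter> C = {}" by (auto simp: B_def C_def)
  have finC: "finite C" unfolding C_def by simp
  have tz: "tight n k z = tauBC n B C u"
  proof (rule set_eqI)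
    fix l show "l \<in> tight n k z \<longleftrightarrow> l \<in> tauBC n B C u"
    proof (cases l)
      case (Lo i)
      have "i < n \<Longrightarrow> z i = 0 \<longleftrightarrow> z i \<noteq> 1 \<and> \<not> (0 < z i \<and> z i < 1)"
        using z01[of i] by auto
      then show ?thesis using Lo unfolding tight_def cons_def tauBC_def B_def C_def by auto
    next
      case (Hi i) then show ?thesis unfolding tight_def cons_def tauBC_def B_def C_def by auto
    next
      case SL then show ?thesis using nSL unfolding tauBC_def by auto
    next
      case SU then show ?thesis unfolding tauBC_def u_def by auto
    qed
  qed
  have "aff_dim_pt F = int (if u then card C - 1 else card C)"
    using dim_face[OF zP nSL] Feq by (simp add: C_def u_def)
  then have dim: "int j = int (if u then card C - 1 else card C)" using dF by simp
  have zsum: "(\<Sum>i<n. z i) = real (card B) + (\<Sum>i\<in>C. z i)"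
  proof -
    have "(\<Sum>i<n. z i) = (\<Sum>i<n. (if i \<in> B then 1 else 0) + (if i \<in> C then z i else 0))"
    proof (rule sum.cong[OF refl])
      fix i assume "i \<in> {..<n}"
      then have "z i = 0 \<or> i \<in> B \<or> i \<in> C" using z01[of i] by (auto simp: B_def C_def)
      then show "z i = (if i \<in> B then 1 else 0) + (if i \<in> C then z i else 0)"
        by (auto simp: B_def C_def)
    qed
    also have "\<dots> = real (card B) + (\<Sum>i\<in>C. z i)" by (rule sum_split_BC[OF BC])
    finally show ?thesis .
  qed
  have Cne: "C \<noteq> {}" using dim j by (auto split: if_splits)
  have sC: "0 < (\<Sum>i\<in>C. z i)" "(\<Sum>i\<in>C. z i) < real (card C)"
  proof -
    show "0 < (\<Sum>i\<in>C. z i)" using finC Cne by (intro sum_pos) (auto simp: C_def)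
    have "(\<Sum>i\<in>C. z i) < (\<Sum>i\<in>C. 1)" using finC Cne by (intro sum_strict_mono) (auto simp: C_def)
    then show "(\<Sum>i\<in>C. z i) < real (card C)" by simp
  qed
  have ks: "real k - 1 \<le> (\<Sum>i<n. z i)" "(\<Sum>i<n. z i) \<le> real k" using zP by (auto simp: hypersimplex_def)
  have ks2: "(\<Sum>i<n. z i) \<noteq> real k - 1" using nSL by (simp add: SL_tight)
  have "(B, C, u) \<in> Rset n k j"
  proof (cases u)
    case True
    then have sk: "(\<Sum>i<n. z i) = real k" by (simp add: u_def SU_tight)
    have "card B < k" "k < card B + card C" using sk zsum sC by linarith+
    moreover have "card C = j + 1" using dim True Cne finC by (auto simp: card_gt_0_iff)
    ultimately show ?thesis using BC True by (simp add: Rset_def)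
  next
    case False
    then have sk: "(\<Sum>i<n. z i) \<noteq> real k" by (simp add: u_def SU_tight)
    have "real (card B) < real k" "real k - 1 < real (card B) + real (card C)"
      using sk ks ks2 zsum sC by linarith+
    then have "card B + 1 \<le> k" "k \<le> card B + card C" by linarith+
    moreover have "card C = j" using dim False by simp
    ultimately show ?thesis using BC False by (simp add: Rset_def)
  qed
  moreover have "G = phi n k (B, C, u)" using G Feq tz by (simp add: phi_def)
  ultimately show "G \<in> phi n k ` Rset n k j" by blast
next
  fix G assume "G \<in> phi n k ` Rset n k j"
  then obtain B C u where R: "(B, C, u) \<in> Rset n k j" and G: "G = phi n k (B, C, u)" by auto
  let ?z = "ptBC k B C u"
  note r = realize[OF R j]
  define F where "F = fc n k (tight n k ?z)"
  have F: "is_face F (hypersimplex n k)" unfolding F_def by (rule is_face_fc)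
  have "aff_dim_pt F = int (if SU \<in> tight n k ?z then card C - 1 else card C)"
    unfolding F_def using dim_face[OF r(1) r(3)] r(4) by simp
  also have "\<dots> = int j" using R unfolding r(2) by (auto simp: Rset_def tauBC_def split: if_splits)
  finally have dF: "aff_dim_pt F = int j" .
  have GF: "G = F \<inter> hypersimplex_ho n k" unfolding G F_def r(2) by (simp add: phi_def)
  have "?z \<in> G" unfolding GF F_def using r by (simp add: fc_mem ho_alt)
  then show "G \<in> {G. \<exists>F. is_face F (hypersimplex n k) \<and> aff_dim_pt F = int j \<and>
      G = F \<inter> hypersimplex_ho n k \<and> G \<noteq> {}}" using F dF GF by blast
qed

lemma f_ho_Rset: "1 \<le> j \<Longrightarrow> f_ho j n k = card (Rset n k j)"
  unfolding f_ho_def by (simp add: GS_eq card_image phi_inj)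

definition Pairs :: "nat \<Rightarrow> nat \<Rightarrow> nat \<Rightarrow> (nat set \<times> nat set) set" where
  "Pairs n b c = {(B, C). B \<subseteq> {..<n} \<and> C \<subseteq> {..<n} \<and> B \<inter> C = {} \<and> card B = b \<and> card C = c}"

lemma card_Pairs: "card (Pairs n b c) = (n choose c) * ((n - c) choose b)"
proof -
  define A where "A = {C. C \<subseteq> {..<n} \<and> card C = c}"
  define S where "S = (SIGMA C:A. {B. B \<subseteq> {..<n} - C \<and> card B = b})"
  have eq: "Pairs n b c = (\<lambda>(C, B). (B, C)) ` S"
    unfolding Pairs_def S_def A_def by (auto simp: image_iff)
  have inj: "inj_on (\<lambda>(C, B). (B, C)) S" by (auto simp: inj_on_def)
  have finA: "finite A" unfolding A_def by (rule finite_subset[of _ "Pow {..<n}"]) auto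
  have cA: "card A = n choose c" unfolding A_def using n_subsets[of "{..<n}" c] by simp
  have "card S = (\<Sum>C\<in>A. card {B. B \<subseteq> {..<n} - C \<and> card B = b})"
    unfolding S_def using finA by (intro card_SigmaI) auto
  also have "\<dots> = (\<Sum>C\<in>A. (n - c) choose b)"
  proof (rule sum.cong[OF refl])
    fix C assume C: "C \<in> A"
    then have "card ({..<n} - C) = n - c" unfolding A_def by (subst card_Diff_subset) (auto intro: finite_subset)
    then show "card {B. B \<subseteq> {..<n} - C \<and> card B = b} = (n - c) choose b"
      using n_subsets[of "{..<n} - C" b] by simp
  qed
  also have "\<dots> = (n choose c) * ((n - c) choose b)" using cA by simp
  finally show ?thesis unfolding eq using inj by (simp add: card_image)
qed

lemma finite_Pairs: "finite (Pairs n b c)"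
  by (rule finite_subset[of _ "Pow {..<n} \<times> Pow {..<n}"]) (auto simp: Pairs_def)

lemma card_UN_Pairs:
  "card (\<Union>b\<in>{p..q}. Pairs n b c) = (\<Sum>b\<in>{p..q}. (n choose c) * ((n - c) choose b))"
proof -
  have "card (\<Union>b\<in>{p..q}. Pairs n b c) = (\<Sum>b\<in>{p..q}. card (Pairs n b c))"
    by (rule card_UN_disjoint) (simp_all add: finite_Pairs, auto simp: Pairs_def)
  then show ?thesis by (simp add: card_Pairs)
qed

lemma card_Rset:
  assumes k: "1 \<le> k"
  shows "card (Rset n k j) = (\<Sum>b\<in>{k-j..k-1}. (n choose j) * ((n - j) choose b))
      + (\<Sum>b\<in>{k-j..k-1}. (n choose (j+1)) * ((n - (j+1)) choose b))"
proof -
  define P1 where "P1 = (\<Union>b\<in>{k-j..k-1}. Pairs n b j)"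
  define P2 where "P2 = (\<Union>b\<in>{k-j..k-1}. Pairs n b (j+1))"
  have eq: "Rset n k j = (\<lambda>(B, C). (B, C, False)) ` P1 \<union> (\<lambda>(B, C). (B, C, True)) ` P2"
  proof (rule set_eqI)
    fix x :: "nat set \<times> nat set \<times> bool"
    obtain B C u where x: "x = (B, C, u)" by (cases x) auto
    show "x \<in> Rset n k j \<longleftrightarrow> x \<in> (\<lambda>(B, C). (B, C, False)) ` P1 \<union> (\<lambda>(B, C). (B, C, True)) ` P2"
      unfolding x using k by (cases u) (auto simp: Rset_def P1_def P2_def Pairs_def image_iff)
  qed
  have f1: "finite P1" "finite P2" unfolding P1_def P2_def by (auto simp: finite_Pairs)
  have "card (Rset n k j) = card ((\<lambda>(B, C). (B, C, False)) ` P1) + card ((\<lambda>(B, C). (B, C, True)) ` P2)"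
    unfolding eq using f1 by (intro card_Un_disjoint) auto
  also have "card ((\<lambda>(B, C). (B, C, False)) ` P1) = card P1"
    by (rule card_image) (auto simp: inj_on_def)
  also have "card ((\<lambda>(B, C). (B, C, True)) ` P2) = card P2"
    by (rule card_image) (auto simp: inj_on_def)
  finally show ?thesis unfolding P1_def P2_def card_UN_Pairs .
qed

lemma Mi_term: "Mi (int n - int c - int b) (int b) (int c) = int ((n choose c) * ((n - c) choose b))"
proof (cases "c + b \<le> n")
  case True
  then have "nat (int n - int c - int b) = n - c - b" by simp
  moreover have "Mn (n - c - b) b c = (n choose c) * ((n - c) choose b)"
    unfolding Mn_def using True by (simp add: add.commute)
  ultimately show ?thesis using True by (simp add: Mi_def)
next
  case False
  then have "(n choose c) * ((n - c) choose b) = 0"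
    by (cases "c \<le> n") auto
  then show ?thesis using False by (simp add: Mi_def)
qed

lemma sum_int_nat_interval:
  assumes k: "1 \<le> k" and z: "\<And>b. b < 0 \<Longrightarrow> f b = 0"
  shows "(\<Sum>b\<in>{int k - int j..int k - 1}. f b) = (\<Sum>b\<in>{k-j..k-1}. f (int b))"
proof -
  have "(\<Sum>b\<in>{int k - int j..int k - 1}. f b) = (\<Sum>b\<in>int ` {k-j..k-1}. f b)"
  proof (rule sum.mono_neutral_right)
    show "finite {int k - int j..int k - 1}" by simp
    show "int ` {k-j..k-1} \<subseteq> {int k - int j..int k - 1}" using k by auto
    show "\<forall>b\<in>{int k - int j..int k - 1} - int ` {k-j..k-1}. f b = 0"
    proof
      fix b assume b: "b \<in> {int k - int j..int k - 1} - int ` {k-j..k-1}"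
      have "b < 0"
      proof (rule ccontr)
        assume "\<not> b < 0"
        then have "b = int (nat b)" by simp
        moreover have "nat b \<in> {k-j..k-1}" using b \<open>\<not> b < 0\<close> by auto
        ultimately show False using b by (metis DiffD2 imageI)
      qed
      then show "f b = 0" by (rule z)
    qed
  qed
  also have "\<dots> = (\<Sum>b\<in>{k-j..k-1}. f (int b))" by (simp add: sum.reindex)
  finally show ?thesis .
qed

lemma Tf_nat:
  assumes "1 \<le> k"
  shows "Tf (int k) (int m) (int j) = int (\<Sum>b\<in>{k-j..k-1}. ((k+m) choose j) * ((k+m-j) choose b))"
proof -
  have "Tf (int k) (int m) (int j) = (\<Sum>b\<in>{k-j..k-1}. Mi (int k + int m - int j - int b) (int b) (int j))"
    unfolding Tf_def by (rule sum_int_nat_interval[OF assms]) (simp add: Mi_def)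
  also have "\<dots> = (\<Sum>b\<in>{k-j..k-1}. int (((k+m) choose j) * ((k+m-j) choose b)))"
  proof (rule sum.cong[OF refl])
    fix b
    have "int k + int m - int j - int b = int (k+m) - int j - int b" by simp
    then show "Mi (int k + int m - int j - int b) (int b) (int j) = int (((k+m) choose j) * ((k+m-j) choose b))"
      using Mi_term[of "k+m" j b] by simp
  qed
  finally show ?thesis by simp
qed

lemma Uf_nat:
  assumes "1 \<le> k"
  shows "Uf (int k) (int m) (int j) = int (\<Sum>b\<in>{k-j..k-1}. ((k+m) choose (j+1)) * ((k+m-(j+1)) choose b))"
proof -
  have "Uf (int k) (int m) (int j) = (\<Sum>b\<in>{k-j..k-1}. Mi (int k + int m - int j - 1 - int b) (int b) (int j + 1))"
    unfolding Uf_def by (rule sum_int_nat_interval[OF assms]) (simp add: Mi_def)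
  also have "\<dots> = (\<Sum>b\<in>{k-j..k-1}. int (((k+m) choose (j+1)) * ((k+m-(j+1)) choose b)))"
  proof (rule sum.cong[OF refl])
    fix b
    have e1: "int k + int m - int j - 1 - int b = int (k+m) - int (j+1) - int b" by simp
    have e2: "int j + 1 = int (j+1)" by simp
    show "Mi (int k + int m - int j - 1 - int b) (int b) (int j + 1) = int (((k+m) choose (j+1)) * ((k+m-(j+1)) choose b))"
      unfolding e1 e2 by (rule Mi_term)
  qed
  finally show ?thesis by simp
qed

lemma TU_zero:
  assumes "\<not> (1 \<le> k \<and> 1 \<le> j \<and> j \<le> k + m)"
  shows "Tf (int k) (int m) (int j) + Uf (int k) (int m) (int j) = 0"
proof -
  consider "k = 0" | "j = 0" | "1 \<le> k" "j > k + m" using assms by linarith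
  then show ?thesis
  proof cases
    case 1 then show ?thesis unfolding Tf_def Uf_def by (auto intro!: sum.neutral simp: Mi_def)
  next
    case 2 then show ?thesis unfolding Tf_def Uf_def by simp
  next
    case 3 then show ?thesis unfolding Tf_nat[OF 3(1)] Uf_nat[OF 3(1)] by (simp add: binomial_eq_0)
  qed
qed

lemma face_gf_eq: "face_gf = mk3 (\<lambda>k m j. Tf k m j + Uf k m j)"
proof (rule fps3_eqI)
  fix k m j
  show "nth3 face_gf k m j = nth3 (mk3 (\<lambda>k m j. Tf k m j + Uf k m j)) k m j"
  proof (cases "1 \<le> k \<and> 1 \<le> j \<and> j \<le> k + m")
    case True
    then have "nth3 face_gf k m j = int (f_ho j (k+m) k)" by (simp add: face_gf_def)
    also have "\<dots> = int (card (Rset (k+m) k j))" using True by (simp add: f_ho_Rset)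
    also have "\<dots> = Tf (int k) (int m) (int j) + Uf (int k) (int m) (int j)"
      using True by (simp add: card_Rset Tf_nat Uf_nat)
    finally show ?thesis by simp
  next
    case False
    then show ?thesis using TU_zero[OF False] by (auto simp: face_gf_def)
  qed
qed

theorem theorem2p1:
  shows "face_gf * ((1 - fps_x - fps_y) * (1 - fps_x - fps_y - fps_x * fps_t)
            * (1 - fps_x - fps_y - fps_y * fps_t))
         = (1 - fps_x) * fps_x * fps_t"
  by (rule final_alg[OF face_gf_eq])

end
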